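(* Let $X$ be an admissible complete CAT(1) space and $T\colon X\to X$ a vicinal mapping. Then $\mathrm{Fix}(T)$ is nonempty if and only if there exists $x\in X$ such that the sequence $\{T^nx\}$ is spherically bounded and $\sup_{n\in\mathbb N} d(T^nx,T^{n-1}x)<\pi/2$.
   Context: A CAT(1) space is a $\pi$-geodesic metric space in which every geodesic triangle of perimeter $<2\pi$ satisfies the CAT(1) comparison inequality relative to its comparison triangle in the unit sphere $\mathbb S^2$ with spherical metric. It is admissible if $d(v,v')<\pi/2$ for all $v,v'\in X$. A sequence $\{x_n\}$ is spherically bounded if $\inf_{y\in X}\limsup_{n\to\infty} d(x_n,y)<\pi/2$. $\mathrm{Fix}(T)=\{u: Tu=u\}$. With $C_z=\cos d(Tz,z)$, $T$ is vicinal if for all $x,y\in X$: $\bigl(C_x^2(1+C_y^2)+C_y^2(1+C_x^2)\bigr)\cos d(Tx,Ty)\ge C_x^2(1+C_y^2)\cos d(Tx,y)+C_y^2(1+C_x^2)\cos d(Ty,x)$. *)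

theory Defs
  imports "HOL-Analysis.Analysis"
begin

definition geodesic_in :: "'a::metric_space set \<Rightarrow> (real \<Rightarrow> 'a) \<Rightarrow> 'a \<Rightarrow> 'a \<Rightarrow> bool" where
  "geodesic_in X g a b \<longleftrightarrow>
     g 0 = a \<and> g (dist a b) = b \<and> g ` {0..dist a b} \<subseteq> X \<and>
     (\<forall>s\<in>{0..dist a b}. \<forall>t\<in>{0..dist a b}. dist (g s) (g t) = \<bar>s - t\<bar>)"

definition pi_geodesic :: "'a::metric_space set \<Rightarrow> bool" where
  "pi_geodesic X \<longleftrightarrow> (\<forall>a\<in>X. \<forall>b\<in>X. dist a b < pi \<longrightarrow> (\<exists>g. geodesic_in X g a b))"

definition on_S2 :: "real^3 \<Rightarrow> bool" where
  "on_S2 P \<longleftrightarrow> norm P = 1"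

definition sdist :: "real^3 \<Rightarrow> real^3 \<Rightarrow> real" where
  "sdist P Q = arccos (P \<bullet> Q)"

text \<open>Unit-speed great-circle geodesic from A to B in S^2 (for sdist A B < pi),
  evaluated at arclength s.\<close>
definition sgeod :: "real^3 \<Rightarrow> real^3 \<Rightarrow> real \<Rightarrow> real^3" where
  "sgeod A B s =
     (if A = B then A
      else (let \<theta> = sdist A B in
            (sin (\<theta> - s) / sin \<theta>) *\<^sub>R A + (sin s / sin \<theta>) *\<^sub>R B))"

text \<open>CAT(1) inequality for the geodesic triangle with vertices p, q, r and sides
  g1 (p to q), g2 (q to r), g3 (r to p): for the comparison triangle P, Q, R in S^2
  (same side lengths), distances between any two points of the triangle are at most
  the spherical distances of their comparison points.\<close>
definition cat1_triangle_ineq ::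
  "'a::metric_space \<Rightarrow> 'a \<Rightarrow> 'a \<Rightarrow> (real \<Rightarrow> 'a) \<Rightarrow> (real \<Rightarrow> 'a) \<Rightarrow> (real \<Rightarrow> 'a) \<Rightarrow> bool" where
  "cat1_triangle_ineq p q r g1 g2 g3 \<longleftrightarrow>
     (\<forall>P Q R. on_S2 P \<and> on_S2 Q \<and> on_S2 R \<and>
        sdist P Q = dist p q \<and> sdist Q R = dist q r \<and> sdist R P = dist r p \<longrightarrow>
        (let sides = {(g1, P, Q, dist p q), (g2, Q, R, dist q r), (g3, R, P, dist r p)} in
         \<forall>(g, A, B, l)\<in>sides. \<forall>(h, C, D, m)\<in>sides.
           \<forall>s\<in>{0..l}. \<forall>t\<in>{0..m}. dist (g s) (h t) \<le> sdist (sgeod A B s) (sgeod C D t)))"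

definition CAT1 :: "'a::metric_space set \<Rightarrow> bool" where
  "CAT1 X \<longleftrightarrow> pi_geodesic X \<and>
     (\<forall>p\<in>X. \<forall>q\<in>X. \<forall>r\<in>X. \<forall>g1 g2 g3.
        dist p q + dist q r + dist r p < 2 * pi \<and>
        geodesic_in X g1 p q \<and> geodesic_in X g2 q r \<and> geodesic_in X g3 r p \<longrightarrow>
        cat1_triangle_ineq p q r g1 g2 g3)"

definition admissible :: "'a::metric_space set \<Rightarrow> bool" where
  "admissible X \<longleftrightarrow> (\<forall>v\<in>X. \<forall>v'\<in>X. dist v v' < pi / 2)"

definition spherically_bounded :: "'a::metric_space set \<Rightarrow> (nat \<Rightarrow> 'a) \<Rightarrow> bool" where
  "spherically_bounded X x \<longleftrightarrow>
     (INF y\<in>X. limsup (\<lambda>n. ereal (dist (x n) y))) < ereal (pi / 2)"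

definition Fix :: "'a set \<Rightarrow> ('a \<Rightarrow> 'a) \<Rightarrow> 'a set" where
  "Fix X T = {u\<in>X. T u = u}"

definition vicinal :: "'a::metric_space set \<Rightarrow> ('a \<Rightarrow> 'a) \<Rightarrow> bool" where
  "vicinal X T \<longleftrightarrow>
     (\<forall>x\<in>X. \<forall>y\<in>X.
        let Cx = cos (dist (T x) x); Cy = cos (dist (T y) y) in
        (Cx\<^sup>2 * (1 + Cy\<^sup>2) + Cy\<^sup>2 * (1 + Cx\<^sup>2)) * cos (dist (T x) (T y))
          \<ge> Cx\<^sup>2 * (1 + Cy\<^sup>2) * cos (dist (T x) y) + Cy\<^sup>2 * (1 + Cx\<^sup>2) * cos (dist (T y) x))"

end

theory Submission
  imports Defs
begin


lemma dot3: "(vector [a1,a2,a3] :: real^3) \<bullet> vector [b1,b2,b3] = a1*b1+a2*b2+a3*b3"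
  by (simp add: inner_vec_def sum_3)

lemma comp_tri:
  fixes a b c :: real
  assumes "0 \<le> a" "0 \<le> b" "0 < c" "b + c < pi" "a \<le> b + c" "b \<le> a + c" "c \<le> a + b" "c < pi"
  shows "\<exists>P Q R. on_S2 P \<and> on_S2 Q \<and> on_S2 R \<and> P \<bullet> Q = cos b \<and> Q \<bullet> R = cos c \<and> R \<bullet> P = cos a"
proof -
  have sc: "sin c > 0" using assms by (intro sin_gt_zero) auto
  define u where "u = (cos a - cos b * cos c) / sin c"
  have c1: "cos (b + c) \<le> cos a"
    using assms by (subst cos_mono_le_eq) auto
  have c2: "cos a \<le> cos (b - c)"
  proof (cases "b \<le> c")
    case True
    have "cos (b - c) = cos (c - b)" by (metis cos_minus minus_diff_eq)
    moreover have "cos a \<le> cos (c - b)" using assms True by (subst cos_mono_le_eq) auto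
    ultimately show ?thesis by simp
  next
    case False
    then show ?thesis using assms by (subst cos_mono_le_eq) auto
  qed
  have sb: "sin b \<ge> 0" using assms by (intro sin_ge_zero) auto
  have "\<bar>cos a - cos b * cos c\<bar> \<le> sin b * sin c"
    using c1 c2 by (simp add: cos_add cos_diff abs_le_iff)
  hence "\<bar>u\<bar> \<le> sin b" using sc by (simp add: u_def abs_divide divide_le_eq)
  hence "u^2 \<le> (sin b)^2" by (metis abs_le_square_iff abs_of_nonneg sb) 
  hence v0: "0 \<le> 1 - (cos b)^2 - u^2" using sin_squared_eq[of b] by linarith
  define v where "v = sqrt (1 - (cos b)^2 - u^2)"
  have vv: "v * v = 1 - (cos b)^2 - u^2" using v0 by (simp add: v_def)
  define P where "P = (vector [cos b, u, v] :: real^3)"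
  define Q where "Q = (vector [1, 0, 0] :: real^3)"
  define R where "R = (vector [cos c, sin c, 0] :: real^3)"
  have "P \<bullet> P = 1" unfolding P_def dot3 using vv by (simp add: power2_eq_square)
  moreover have "Q \<bullet> Q = 1" unfolding Q_def dot3 by simp
  moreover have "R \<bullet> R = 1" unfolding R_def dot3 using sin_cos_squared_add[of c] by (simp add: power2_eq_square)
  moreover have "P \<bullet> Q = cos b" unfolding P_def Q_def dot3 by simp
  moreover have "Q \<bullet> R = cos c" unfolding R_def Q_def dot3 by simp
  moreover have "R \<bullet> P = cos a" unfolding R_def P_def dot3 u_def using sc by (simp add: field_simps)
  ultimately show ?thesis unfolding on_S2_def by (metis norm_eq_sqrt_inner real_sqrt_one)
qed

lemma unit_dot: "on_S2 A \<Longrightarrow> A \<bullet> A = 1"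
  unfolding on_S2_def by (metis norm_eq_sqrt_inner real_sqrt_eq_1_iff)

lemma sgeod_0:
  assumes "on_S2 A" "on_S2 B" "A \<bullet> B > -1"
  shows "sgeod A B 0 = A"
proof (cases "A = B")
  case False
  have "A \<bullet> B \<le> 1" using norm_cauchy_schwarz[of A B] assms unfolding on_S2_def by simp
  moreover have "A \<bullet> B \<noteq> 1"
  proof
    assume "A \<bullet> B = 1"
    hence "(A - B) \<bullet> (A - B) = 0" using unit_dot[OF assms(1)] unit_dot[OF assms(2)]
      by (simp add: inner_diff inner_commute)
    thus False using False by simp
  qed
  ultimately have "-1 < A \<bullet> B" "A \<bullet> B < 1" using assms by auto
  hence "0 < sdist A B" "sdist A B < pi" unfolding sdist_def
    by (auto intro!: arccos_lt_bounded simp: arccos_lt_bounded)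
  hence "sin (sdist A B) \<noteq> 0" using sin_gt_zero by force
  thus ?thesis using False by (simp add: sgeod_def Let_def)
qed (simp add: sgeod_def)

lemma sgeod_mid:
  assumes "on_S2 P" "on_S2 Q" "on_S2 R" "Q \<bullet> R = cos c" "0 < c" "c < pi"
  shows "cos (sdist P (sgeod Q R (c/2))) = (P \<bullet> Q + P \<bullet> R) / (2 * cos (c/2))"
    and "sdist P (sgeod Q R (c/2)) \<le> pi"
proof -
  have cc: "cos (c/2) > 0" using assms by (intro cos_gt_zero_pi) auto
  have sh: "sin (c/2) > 0" using assms by (intro sin_gt_zero) auto
  have sc: "sin c = 2 * sin (c/2) * cos (c/2)" using sin_double[of "c/2"] by simp
  have QR: "Q \<noteq> R"
  proof
    assume "Q = R" hence "cos c = 1" using assms unit_dot by metis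
    moreover have "cos c < 1" using assms cos_monotone_0_pi[of 0 c] by simp
    ultimately show False by simp
  qed
  have sd: "sdist Q R = c" unfolding sdist_def using assms by (simp add: arccos_cos)
  define k where "k = 1 / (2 * cos (c/2))"
  have kk: "sin (c/2) / sin c = k" unfolding k_def sc using sh by simp
  have M: "sgeod Q R (c/2) = k *\<^sub>R (Q + R)"
    using QR sd unfolding sgeod_def Let_def by (simp add: scaleR_add_right kk)
  have cd: "1 + cos c = 2 * (cos (c/2))^2" using cos_double_cos[of "c/2"] by simp
  have "(k *\<^sub>R (Q + R)) \<bullet> (k *\<^sub>R (Q + R)) = k^2 * (2 + 2 * cos c)"
    using unit_dot[OF assms(2)] unit_dot[OF assms(3)] assms(4)
    by (simp add: inner_add inner_commute power2_eq_square algebra_simps)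
  also have "\<dots> = 1" unfolding k_def using cd cc by (simp add: field_simps power2_eq_square)
  finally have nM: "norm (k *\<^sub>R (Q + R)) = 1" by (simp add: norm_eq_sqrt_inner)
  have w: "\<bar>P \<bullet> (k *\<^sub>R (Q + R))\<bar> \<le> 1"
    using Cauchy_Schwarz_ineq2[of P "k *\<^sub>R (Q + R)"] nM assms(1) unfolding on_S2_def by simp
  have "P \<bullet> (k *\<^sub>R (Q + R)) = (P \<bullet> Q + P \<bullet> R) / (2 * cos (c/2))"
    unfolding k_def by (simp add: inner_add_right)
  thus "cos (sdist P (sgeod Q R (c/2))) = (P \<bullet> Q + P \<bullet> R) / (2 * cos (c/2))"
    using w unfolding M sdist_def by (metis abs_le_iff cos_arccos minus_le_iff)
  show "sdist P (sgeod Q R (c/2)) \<le> pi" unfolding M sdist_def using w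
    by (intro arccos_ubound) (auto simp: abs_le_iff)
qed


lemma cat1_use:
  assumes "cat1_triangle_ineq p q r g1 g2 g3" "on_S2 P" "on_S2 Q" "on_S2 R"
    "sdist P Q = dist p q" "sdist Q R = dist q r" "sdist R P = dist r p"
    "s \<in> {0..dist p q}" "t \<in> {0..dist q r}"
  shows "dist (g1 s) (g2 t) \<le> sdist (sgeod P Q s) (sgeod Q R t)"
proof -
  define S where "S = {(g1, P, Q, dist p q), (g2, Q, R, dist q r), (g3, R, P, dist r p)}"
  have H0: "on_S2 P \<and> on_S2 Q \<and> on_S2 R \<and>
        sdist P Q = dist p q \<and> sdist Q R = dist q r \<and> sdist R P = dist r p \<longrightarrow>
        (let sides = S in
         \<forall>(g, A, B, l)\<in>sides. \<forall>(h, C, D, m)\<in>sides.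
           \<forall>s\<in>{0..l}. \<forall>t\<in>{0..m}. dist (g s) (h t) \<le> sdist (sgeod A B s) (sgeod C D t))"
    using assms(1) unfolding cat1_triangle_ineq_def S_def by (rule spec[of _ R, OF spec[of _ Q, OF spec[of _ P]]])
  have H: "\<forall>(g, A, B, l)\<in>S. \<forall>(h, C, D, m)\<in>S.
           \<forall>s\<in>{0..l}. \<forall>t\<in>{0..m}. dist (g s) (h t) \<le> sdist (sgeod A B s) (sgeod C D t)"
    using mp[OF H0] assms(2-7) unfolding Let_def by blast
  have m1: "(g1, P, Q, dist p q) \<in> S" and m2: "(g2, Q, R, dist q r) \<in> S" unfolding S_def by auto
  have H1: "\<forall>(h, C, D, m)\<in>S. \<forall>s\<in>{0..dist p q}. \<forall>t\<in>{0..m}. dist (g1 s) (h t) \<le> sdist (sgeod P Q s) (sgeod C D t)"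
    using bspec[OF H m1] by (simp only: prod.case)
  have "\<forall>s\<in>{0..dist p q}. \<forall>t\<in>{0..dist q r}. dist (g1 s) (g2 t) \<le> sdist (sgeod P Q s) (sgeod Q R t)"
    using bspec[OF H1 m2] by (simp only: prod.case)
  thus ?thesis using assms(8,9) by blast
qed

lemma cat1_tri:
  assumes "CAT1 X" "p \<in> X" "q \<in> X" "r \<in> X" "dist p q + dist q r + dist r p < 2 * pi"
    "geodesic_in X g1 p q" "geodesic_in X g2 q r" "geodesic_in X g3 r p"
  shows "cat1_triangle_ineq p q r g1 g2 g3"
  using assms unfolding CAT1_def by blast
lemma geo_ex:
  assumes "CAT1 X" "p \<in> X" "q \<in> X" "dist p q < pi"
  shows "\<exists>g. geodesic_in X g p q"
  using assms unfolding CAT1_def pi_geodesic_def by blast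

lemma midpoint:
  assumes cat: "CAT1 X" and adm: "admissible X" and yz: "y \<in> X" "z \<in> X"
  shows "\<exists>m\<in>X. \<forall>p\<in>X. cos (dist p y) + cos (dist p z) \<le> 2 * cos (dist y z / 2) * cos (dist p m)"
proof (cases "y = z")
  case True
  thus ?thesis using yz by (intro bexI[of _ y]) auto
next
  case False
  define c where "c = dist y z"
  have c0: "0 < c" using False by (simp add: c_def)
  have cp: "c < pi/2" using adm yz unfolding admissible_def c_def by auto
  have pp: "pi/2 < pi" by simp
  obtain g where g: "geodesic_in X g y z" using geo_ex[OF cat yz] cp pp unfolding c_def
    by (meson less_trans)
  have hc: "c/2 \<in> {0..dist y z}" using c0 unfolding c_def by simp
  have mX: "g (c/2) \<in> X" using g hc unfolding geodesic_in_def by blast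
  have cc: "cos (c/2) > 0" using c0 cp by (intro cos_gt_zero_pi) auto
  show ?thesis
  proof (intro bexI[OF _ mX] ballI)
    fix p assume pX: "p \<in> X"
    define a where "a = dist z p"
    define b where "b = dist p y"
    have ap: "a < pi/2" "b < pi/2" using adm yz pX unfolding admissible_def a_def b_def by auto
    obtain g1 where g1: "geodesic_in X g1 p y" using geo_ex[OF cat pX yz(1)] ap pp unfolding b_def
      by (meson less_trans)
    obtain g3 where g3: "geodesic_in X g3 z p" using geo_ex[OF cat yz(2) pX] ap pp unfolding a_def
      by (meson less_trans)
    have "dist p y + dist y z + dist z p < 2 * pi" using ap cp pi_gt_zero unfolding a_def b_def c_def by linarith
    hence tri: "cat1_triangle_ineq p y z g1 g g3" using cat1_tri[OF cat pX yz _ g1 g g3] by blast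
    have "\<exists>P Q R. on_S2 P \<and> on_S2 Q \<and> on_S2 R \<and> P \<bullet> Q = cos b \<and> Q \<bullet> R = cos c \<and> R \<bullet> P = cos a"
    proof (rule comp_tri)
      have t1: "dist z p \<le> dist z y + dist p y" by (rule dist_triangle2)
      have t2: "dist p y \<le> dist p z + dist y z" by (rule dist_triangle2)
      have t3: "dist y z \<le> dist y p + dist z p" by (rule dist_triangle2)
      have cm: "dist z y = dist y z" "dist p z = dist z p" "dist y p = dist p y" by (simp_all add: dist_commute)
      show "0 \<le> a" "0 \<le> b" "0 < c" "a \<le> b + c" "b \<le> a + c" "c \<le> a + b"
        using t1 t2 t3 cm c0 unfolding a_def b_def c_def by auto
      show "b + c < pi" "c < pi" using ap cp pi_gt_zero by linarith+
    qed
    then obtain P Q R where PQR: "on_S2 P" "on_S2 Q" "on_S2 R" "P \<bullet> Q = cos b" "Q \<bullet> R = cos c" "R \<bullet> P = cos a"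
      by blast
    have a0: "0 \<le> a" "0 \<le> b" by (auto simp: a_def b_def)
    have sd: "sdist P Q = dist p y" "sdist Q R = dist y z" "sdist R P = dist z p"
      unfolding sdist_def PQR using a0 ap c0 cp pp unfolding a_def b_def c_def
      by (auto intro!: arccos_cos) (use pi_gt_zero in linarith)+
    have "dist (g1 0) (g (c/2)) \<le> sdist (sgeod P Q 0) (sgeod Q R (c/2))"
      by (rule cat1_use[OF tri PQR(1-3) sd _ hc]) simp
    moreover have "g1 0 = p" using g1 unfolding geodesic_in_def by blast
    moreover have "sgeod P Q 0 = P"
    proof (rule sgeod_0[OF PQR(1,2)])
      have "cos b > 0" using a0 ap by (intro cos_gt_zero_pi) auto
      thus "P \<bullet> Q > -1" using PQR(4) by linarith
    qed
    ultimately have le: "dist p (g (c/2)) \<le> sdist P (sgeod Q R (c/2))" by simp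
    have cpi: "c < pi" using cp pp by linarith
    have e: "cos (sdist P (sgeod Q R (c/2))) = (cos b + cos a) / (2 * cos (c/2))"
      using sgeod_mid(1)[OF PQR(1-3) PQR(5) c0 cpi] PQR by (simp add: inner_commute)
    have "cos (sdist P (sgeod Q R (c/2))) \<le> cos (dist p (g (c/2)))"
    proof -
      have z: "0 \<le> sdist P (sgeod Q R (c/2))" using le zero_le_dist[of p "g (c/2)"] by linarith
      show ?thesis using le z sgeod_mid(2)[OF PQR(1-3) PQR(5) c0 cpi] by (subst cos_mono_le_eq) auto
    qed
    hence "cos b + cos a \<le> 2 * cos (c/2) * cos (dist p (g (c/2)))"
      using e cc by (simp add: divide_le_eq mult.commute)
    thus "cos (dist p y) + cos (dist p z) \<le> 2 * cos (dist y z / 2) * cos (dist p (g (c/2)))"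
      unfolding a_def b_def c_def by (simp add: dist_commute add.commute)
  qed
qed



definition lbnd :: "(nat \<Rightarrow> 'a::metric_space) \<Rightarrow> 'a \<Rightarrow> real \<Rightarrow> bool" where
  "lbnd xs y t \<longleftrightarrow> eventually (\<lambda>n. t \<le> cos (dist (xs n) y)) sequentially"

lemma lb_mono: "lbnd xs y t \<Longrightarrow> t' \<le> t \<Longrightarrow> lbnd xs y t'"
  unfolding lbnd_def by (auto elim: eventually_mono)

lemma lb_le1: "lbnd xs y t \<Longrightarrow> t \<le> 1"
proof -
  assume "lbnd xs y t"
  then obtain N where "\<forall>n\<ge>N. t \<le> cos (dist (xs n) y)" unfolding lbnd_def eventually_sequentially by blast
  hence "t \<le> cos (dist (xs N) y)" by blast
  thus "t \<le> 1" using cos_le_one[of "dist (xs N) y"] by linarith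
qed

lemma cos_lip: "\<bar>cos a - cos b\<bar> \<le> \<bar>a - b\<bar>" for a b :: real
proof -
  have "\<bar>cos a - cos b\<bar> = 2 * \<bar>sin ((a + b) / 2)\<bar> * \<bar>sin ((b - a) / 2)\<bar>"
    by (simp add: cos_diff_cos abs_mult)
  also have "\<dots> \<le> 2 * 1 * \<bar>(b - a) / 2\<bar>"
    by (intro mult_mono abs_sin_x_le_abs_x) auto
  finally show ?thesis by simp
qed

lemma lb_lip: "lbnd xs y t \<Longrightarrow> lbnd xs u (t - dist y u)"
  unfolding lbnd_def
proof (erule eventually_mono)
  fix n assume "t \<le> cos (dist (xs n) y)"
  moreover have "\<bar>cos (dist (xs n) y) - cos (dist (xs n) u)\<bar> \<le> \<bar>dist (xs n) y - dist (xs n) u\<bar>"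
    by (rule cos_lip)
  moreover have "\<bar>dist (xs n) y - dist (xs n) u\<bar> \<le> dist y u"
  proof -
    have "dist (xs n) y \<le> dist (xs n) u + dist y u" by (rule dist_triangle2)
    moreover have "dist (xs n) u \<le> dist (xs n) y + dist u y" by (rule dist_triangle2)
    moreover have "dist u y = dist y u" by (rule dist_commute)
    ultimately show ?thesis by linarith
  qed
  ultimately show "t - dist y u \<le> cos (dist (xs n) u)" by linarith
qed

lemma lb_mid:
  assumes cat: "CAT1 X" and adm: "admissible X" and xX: "\<forall>n. xs n \<in> X" and yz: "y \<in> X" "z \<in> X"
    and l1: "lbnd xs y t1" and l2: "lbnd xs z t2"
  shows "\<exists>m\<in>X. lbnd xs m ((t1 + t2) / (2 * cos (dist y z / 2)))"
proof -
  obtain m where mX: "m \<in> X" and hm: "\<forall>p\<in>X. cos (dist p y) + cos (dist p z) \<le> 2 * cos (dist y z / 2) * cos (dist p m)"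
    using midpoint[OF cat adm yz] by blast
  have "dist y z < pi/2" using adm yz unfolding admissible_def by blast
  hence cc: "cos (dist y z / 2) > 0" using zero_le_dist[of y z] pi_gt_zero by (intro cos_gt_zero_pi) linarith+
  have "lbnd xs m ((t1 + t2) / (2 * cos (dist y z / 2)))"
    unfolding lbnd_def using eventually_conj[OF l1[unfolded lbnd_def] l2[unfolded lbnd_def]]
  proof (rule eventually_mono)
    fix n assume "t1 \<le> cos (dist (xs n) y) \<and> t2 \<le> cos (dist (xs n) z)"
    moreover have "cos (dist (xs n) y) + cos (dist (xs n) z) \<le> 2 * cos (dist y z / 2) * cos (dist (xs n) m)"
      using hm xX by blast
    ultimately have "t1 + t2 \<le> 2 * cos (dist y z / 2) * cos (dist (xs n) m)" by linarith
    thus "(t1 + t2) / (2 * cos (dist y z / 2)) \<le> cos (dist (xs n) m)" using cc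
      by (simp add: divide_le_eq mult.commute)
  qed
  thus ?thesis using mX by blast
qed


lemma key_ineq:
  assumes cat: "CAT1 X" and adm: "admissible X" and xX: "\<forall>n. xs n \<in> X" and yz: "y \<in> X" "z \<in> X"
    and l1: "lbnd xs y t1" and l2: "lbnd xs z t2"
  shows "(t1 + t2) / 2 \<le> Sup {t. \<exists>y\<in>X. lbnd xs y t} * cos (dist y z / 2)"
proof -
  let ?L = "{t. \<exists>y\<in>X. lbnd xs y t}"
  have bdd: "bdd_above ?L" unfolding bdd_above_def using lb_le1 by blast
  obtain m where mX: "m \<in> X" and lm: "lbnd xs m ((t1 + t2) / (2 * cos (dist y z / 2)))"
    using lb_mid[OF cat adm xX yz l1 l2] by blast
  have "dist y z < pi/2" using adm yz unfolding admissible_def by blast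
  hence cc: "cos (dist y z / 2) > 0" using zero_le_dist[of y z] pi_gt_zero by (intro cos_gt_zero_pi) linarith+
  have "(t1 + t2) / (2 * cos (dist y z / 2)) \<le> Sup ?L"
    using mX lm by (intro cSup_upper[OF _ bdd]) blast
  hence "(t1 + t2) / (2 * cos (dist y z / 2)) * cos (dist y z / 2) \<le> Sup ?L * cos (dist y z / 2)"
    using cc by (intro mult_right_mono) auto
  thus ?thesis using cc by simp
qed

lemma center_exists:
  assumes cat: "CAT1 X" and adm: "admissible X" and comp: "complete X" and xX: "\<forall>n. xs n \<in> X"
    and y0: "y0 \<in> X" and s0: "0 < s0" and l0: "lbnd xs y0 s0"
  shows "\<exists>u\<in>X. \<forall>t < Sup {t. \<exists>y\<in>X. lbnd xs y t}. lbnd xs u t"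
proof -
  define L where "L = {t. \<exists>y\<in>X. lbnd xs y t}"
  define s where "s = Sup L"
  have bdd: "bdd_above L" unfolding bdd_above_def L_def using lb_le1 by blast
  have ne: "L \<noteq> {}" using y0 l0 unfolding L_def by blast
  have ss0: "s0 \<le> s" unfolding s_def using y0 l0 by (intro cSup_upper[OF _ bdd]) (auto simp: L_def)
  hence sp: "s > 0" using s0 by linarith
  have key: "\<And>y z t1 t2. y \<in> X \<Longrightarrow> z \<in> X \<Longrightarrow> lbnd xs y t1 \<Longrightarrow> lbnd xs z t2 \<Longrightarrow> (t1 + t2) / 2 \<le> s * cos (dist y z / 2)"
    unfolding s_def L_def by (rule key_ineq[OF cat adm xX])
  have "\<forall>k. \<exists>y. y \<in> X \<and> lbnd xs y (s - 1 / Suc k)"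
  proof
    fix k
    have "s - 1 / Suc k < s" by simp
    then obtain t where "t \<in> L" "s - 1 / Suc k < t" using less_cSupD[OF ne] unfolding s_def by blast
    thus "\<exists>y. y \<in> X \<and> lbnd xs y (s - 1 / Suc k)" unfolding L_def using lb_mono by fastforce
  qed
  then obtain Y where Y: "\<forall>k. Y k \<in> X \<and> lbnd xs (Y k) (s - 1 / Suc k)"
    using choice[of "\<lambda>k y. y \<in> X \<and> lbnd xs y (s - 1 / Suc k)"] by blast
  have YK: "lbnd xs (Y m) (s - 1 / Suc K)" if "K \<le> m" for m K
  proof -
    have "1 / real (Suc m) \<le> 1 / Suc K" using that by (simp add: frac_le)
    thus ?thesis using Y lb_mono by (metis diff_left_mono)
  qed
  have cau: "Cauchy Y"
    unfolding Cauchy_def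
  proof (intro allI impI)
    fix e :: real assume e: "0 < e"
    define e' where "e' = min e (pi/2)"
    have e'p: "0 < e'" "e' \<le> e" "e' \<le> pi/2" using e by (auto simp: e'_def)
    define \<eta> where "\<eta> = 1 - cos (e'/2)"
    have "cos (e'/2) < cos 0" using e'p pi_gt_zero by (intro cos_monotone_0_pi) linarith+
    hence \<eta>p: "\<eta> > 0" unfolding \<eta>_def by simp
    obtain K where K: "inverse (real (Suc K)) < \<eta> * s" using reals_Archimedean[of "\<eta> * s"] \<eta>p sp by auto
    show "\<exists>M. \<forall>m\<ge>M. \<forall>n\<ge>M. dist (Y m) (Y n) < e"
    proof (intro exI allI impI)
      fix m n assume mn: "K \<le> m" "K \<le> n"
      have "(2 * (s - 1 / Suc K)) / 2 \<le> s * cos (dist (Y m) (Y n) / 2)"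
        using key[OF _ _ YK[OF mn(1)] YK[OF mn(2)]] Y by simp
      hence "s - 1 / Suc K \<le> s * cos (dist (Y m) (Y n) / 2)" by simp
      moreover have "1 / real (Suc K) < \<eta> * s" using K by (simp add: inverse_eq_divide)
      ultimately have "s * cos (e'/2) < s * cos (dist (Y m) (Y n) / 2)" unfolding \<eta>_def
        by (simp add: algebra_simps)
      hence cl: "cos (e'/2) < cos (dist (Y m) (Y n) / 2)" using sp by simp
      have "dist (Y m) (Y n) < pi/2" using adm Y unfolding admissible_def by blast
      hence "dist (Y m) (Y n) / 2 < e'/2" using cl e'p pi_gt_zero zero_le_dist[of "Y m" "Y n"]
        by (subst (asm) cos_mono_less_eq) linarith+
      thus "dist (Y m) (Y n) < e" using e'p by linarith
    qed
  qed
  obtain u where uX: "u \<in> X" and lim: "Y \<longlonglongrightarrow> u"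
    using completeE[OF comp _ cau] Y by blast
  have "lbnd xs u t" if ts: "t < s" for t
  proof -
    define g where "g = s - t"
    have gp: "g > 0" using ts by (simp add: g_def)
    obtain N1 where N1: "\<forall>n\<ge>N1. dist (Y n) u < g/2" using lim gp unfolding lim_sequentially
      by (meson half_gt_zero)
    obtain N2 where N2: "inverse (real (Suc N2)) < g/2" using reals_Archimedean[of "g/2"] gp by auto
    define k where "k = max N1 N2"
    have "lbnd xs (Y k) (s - 1 / Suc N2)" using YK[of N2 k] by (simp add: k_def)
    hence "lbnd xs u (s - 1 / Suc N2 - dist (Y k) u)" by (rule lb_lip)
    moreover have "dist (Y k) u < g/2" using N1 by (simp add: k_def)
    moreover have "1 / real (Suc N2) < g/2" using N2 by (simp add: inverse_eq_divide)
    ultimately show ?thesis by (elim lb_mono) (simp add: g_def)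
  qed
  thus ?thesis using uX unfolding s_def L_def by blast
qed


lemma Tu_center:
  assumes adm: "admissible X" and TX: "T ` X \<subseteq> X" and vic: "vicinal X T"
    and xX: "\<forall>n. xs n \<in> X" and xS: "\<forall>n. xs (Suc n) = T (xs n)"
    and sig: "\<sigma> < pi/2" "\<forall>n. dist (xs (Suc n)) (xs n) \<le> \<sigma>"
    and uX: "u \<in> X" and hu: "\<forall>t<s. lbnd xs u t" and ts: "t < s"
  shows "lbnd xs (T u) t"
proof -
  define C where "C = cos (dist (T u) u)"
  have TuX: "T u \<in> X" using TX uX by blast
  have "dist (T u) u < pi/2" using adm TuX uX unfolding admissible_def by blast
  moreover have "0 \<le> dist (T u) u" by simp
  ultimately have C0: "0 \<le> C" "C \<le> 1" unfolding C_def using pi_gt_zero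
    by (auto intro!: cos_ge_zero simp del: zero_le_dist)
  define \<kappa> where "\<kappa> = cos \<sigma>"
  have sg0: "0 \<le> \<sigma>" using sig(2) zero_le_dist[of "xs (Suc 0)" "xs 0"] by (metis order_trans)
  have \<kappa>p: "0 < \<kappa>" "\<kappa> \<le> 1" unfolding \<kappa>_def using sig sg0 pi_gt_zero by (auto intro!: cos_gt_zero_pi)
  define Cx where "Cx n = cos (dist (xs (Suc n)) (xs n))" for n
  have Cx: "\<kappa> \<le> Cx n" "Cx n \<le> 1" for n
  proof -
    have d: "dist (xs (Suc n)) (xs n) \<le> \<sigma>" using sig(2) by blast
    have d0: "0 \<le> dist (xs (Suc n)) (xs n)" by simp
    show "\<kappa> \<le> Cx n" unfolding \<kappa>_def Cx_def using sig(1) sg0 pi_gt_zero d d0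
      by (subst cos_mono_le_eq) linarith+
  qed (simp add: Cx_def)
  define g where "g n = cos (dist (xs n) (T u))" for n
  define c where "c n = cos (dist (xs n) u)" for n
  define A where "A n = (Cx n)\<^sup>2 * (1 + C\<^sup>2)" for n
  define B where "B n = C\<^sup>2 * (1 + (Cx n)\<^sup>2)" for n
  have vin: "(A n + B n) * g (Suc n) \<ge> A n * c (Suc n) + B n * g n" for n
  proof -
    have "let Cx = cos (dist (T (xs n)) (xs n)); Cy = cos (dist (T u) u) in
        (Cx\<^sup>2 * (1 + Cy\<^sup>2) + Cy\<^sup>2 * (1 + Cx\<^sup>2)) * cos (dist (T (xs n)) (T u))
          \<ge> Cx\<^sup>2 * (1 + Cy\<^sup>2) * cos (dist (T (xs n)) u) + Cy\<^sup>2 * (1 + Cx\<^sup>2) * cos (dist (T u) (xs n))"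
      using vic xX uX unfolding vicinal_def by blast
    thus ?thesis unfolding Let_def A_def B_def Cx_def C_def g_def c_def using xS
      by (simp add: dist_commute)
  qed
  define q where "q = 1 - \<kappa>\<^sup>2 / 4"
  have k2: "\<kappa>\<^sup>2 \<le> 1" "0 < \<kappa>\<^sup>2" using \<kappa>p by (auto simp: power_le_one)
  have q: "0 \<le> q" "q < 1" unfolding q_def using k2 by auto
  define t' where "t' = (t + s) / 2"
  have "lbnd xs u t'" using hu ts by (simp add: t'_def)
  then obtain N where N: "\<forall>n\<ge>N. t' \<le> c n" unfolding lbnd_def eventually_sequentially c_def by blast
  define e where "e n = max 0 (t' - g n)" for n
  have step: "e (Suc n) \<le> q * e n" if nN: "N \<le> n" for n
  proof -
    have A1: "\<kappa>\<^sup>2 \<le> A n"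
    proof -
      have "\<kappa>\<^sup>2 \<le> (Cx n)\<^sup>2" using Cx[of n] \<kappa>p by (intro power_mono) auto
      also have "\<dots> \<le> (Cx n)\<^sup>2 * (1 + C\<^sup>2)" by (simp add: mult_le_cancel_left1 )
      finally show ?thesis unfolding A_def .
    qed
    have A2: "A n \<le> 2" unfolding A_def
    proof -
      have "(Cx n)\<^sup>2 \<le> 1" "C\<^sup>2 \<le> 1" using Cx[of n] \<kappa>p C0 by (auto simp: power_le_one abs_le_iff intro: power_le_one)
      hence "(Cx n)\<^sup>2 * (1 + C\<^sup>2) \<le> 1 * 2" by (intro mult_mono) auto
      thus "(Cx n)\<^sup>2 * (1 + C\<^sup>2) \<le> 2" by simp
    qed
    have B1: "0 \<le> B n" "B n \<le> 2" unfolding B_def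
    proof -
      have "(Cx n)\<^sup>2 \<le> 1" "C\<^sup>2 \<le> 1" using Cx[of n] \<kappa>p C0 by (auto simp: power_le_one abs_le_iff intro: power_le_one)
      hence "C\<^sup>2 * (1 + (Cx n)\<^sup>2) \<le> 1 * 2" by (intro mult_mono) auto
      thus "C\<^sup>2 * (1 + (Cx n)\<^sup>2) \<le> 2" by simp
    qed simp
    have ABp: "0 < A n + B n" using A1 B1 k2 by linarith
    have en: "0 \<le> e n" "t' - g n \<le> e n" by (auto simp: e_def)
    have cs: "t' \<le> c (Suc n)" using N nN by simp
    have "0 \<le> A n" using A1 k2 by linarith
    hence "A n * t' \<le> A n * c (Suc n)" using cs by (intro mult_left_mono) auto
    hence "(A n + B n) * (t' - g (Suc n)) \<le> B n * (t' - g n)" using vin[of n] by (simp add: algebra_simps)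
    also have "\<dots> \<le> B n * e n" using en B1 by (intro mult_left_mono) auto
    also have "\<dots> \<le> q * (A n + B n) * e n"
    proof (rule mult_right_mono[OF _ en(1)])
      have "\<kappa>\<^sup>2 / 4 * (A n + B n) \<le> \<kappa>\<^sup>2 / 4 * 4" using A2 B1 k2 by (intro mult_left_mono) auto
      thus "B n \<le> q * (A n + B n)" unfolding q_def using A1 by (simp add: algebra_simps)
    qed
    finally have "(A n + B n) * (t' - g (Suc n)) \<le> (A n + B n) * (q * e n)" by (simp add: ac_simps)
    hence "t' - g (Suc n) \<le> q * e n" using ABp by simp
    moreover have "0 \<le> q * e n" using q en by simp
    ultimately show ?thesis unfolding e_def by simp
  qed
  have iter: "e (N + k) \<le> q ^ k * e N" for k
  proof (induction k)
    case (Suc k)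
    have "e (N + Suc k) \<le> q * e (N + k)" using step[of "N + k"] by simp
    also have "\<dots> \<le> q * (q ^ k * e N)" using Suc q by (intro mult_left_mono) auto
    finally show ?case by simp
  qed simp
  have eN: "e N \<le> 2"
  proof -
    have "t' \<le> 1" using \<open>lbnd xs u t'\<close> by (rule lb_le1)
    moreover have "-1 \<le> g N" unfolding g_def by simp
    ultimately show ?thesis unfolding e_def by simp
  qed
  have "(\<lambda>k. q ^ k) \<longlonglongrightarrow> 0" using q by (intro LIMSEQ_power_zero) simp
  moreover have "t' - t > 0" using ts by (simp add: t'_def)
  ultimately have "\<exists>K. \<forall>k\<ge>K. norm (q ^ k - 0) < (t' - t) / 2"
    unfolding LIMSEQ_iff by (meson half_gt_zero)
  then obtain K where K: "\<forall>k\<ge>K. norm (q ^ k - 0) < (t' - t) / 2" by blast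
  have "\<forall>n\<ge>N + K. t \<le> cos (dist (xs n) (T u))"
  proof (intro allI impI)
    fix n assume n: "N + K \<le> n"
    define k where "k = n - N"
    have k: "n = N + k" "K \<le> k" using n unfolding k_def by auto
    have "e n \<le> q ^ k * e N" using iter k by simp
    also have "\<dots> \<le> q ^ k * 2" using eN q by (intro mult_left_mono) auto
    also have "\<dots> < t' - t"
    proof -
      have "norm (q ^ k - 0) < (t' - t) / 2" using K k(2) by blast
      hence "q ^ k < (t' - t) / 2" using q by simp
      thus ?thesis by simp
    qed
    finally have "t' - g n < t' - t" unfolding e_def by simp
    thus "t \<le> cos (dist (xs n) (T u))" unfolding g_def by simp
  qed
  thus ?thesis unfolding lbnd_def eventually_sequentially by blast
qed


lemma unique_center:
  assumes cat: "CAT1 X" and adm: "admissible X" and xX: "\<forall>n. xs n \<in> X"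
    and uv: "u \<in> X" "v \<in> X" and sp: "0 < Sup {t. \<exists>y\<in>X. lbnd xs y t}"
    and hu: "\<forall>t < Sup {t. \<exists>y\<in>X. lbnd xs y t}. lbnd xs u t"
    and hv: "\<forall>t < Sup {t. \<exists>y\<in>X. lbnd xs y t}. lbnd xs v t"
  shows "u = v"
proof (rule ccontr)
  assume ne: "u \<noteq> v"
  define s where "s = Sup {t. \<exists>y\<in>X. lbnd xs y t}"
  define d where "d = dist u v"
  have kt: "t \<le> s * cos (d / 2)" if "t < s" for t
    using key_ineq[OF cat adm xX uv, of t t] hu hv that unfolding s_def d_def by simp
  have "s \<le> s * cos (d / 2)"
  proof (rule ccontr)
    assume "\<not> s \<le> s * cos (d / 2)"
    hence "(s + s * cos (d / 2)) / 2 < s" by simp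
    from kt[OF this] show False using \<open>\<not> s \<le> s * cos (d / 2)\<close> by simp
  qed
  hence c1: "1 \<le> cos (d / 2)" using sp unfolding s_def by simp
  have "d < pi/2" using adm uv unfolding admissible_def d_def by blast
  moreover have "0 < d" using ne unfolding d_def by simp
  ultimately have "cos (d / 2) < cos 0" using pi_gt_zero by (intro cos_monotone_0_pi) linarith+
  thus False using c1 by simp
qed

lemma fix_exists:
  assumes cat: "CAT1 X" and adm: "admissible X" and comp: "complete X"
    and TX: "T ` X \<subseteq> X" and vic: "vicinal X T" and x0: "x0 \<in> X"
    and sig: "\<sigma> < pi/2" "\<forall>n. dist ((T ^^ Suc n) x0) ((T ^^ n) x0) \<le> \<sigma>"
    and y0: "y0 \<in> X" and s0: "0 < s0" and l0: "lbnd (\<lambda>n. (T ^^ n) x0) y0 s0"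
  shows "\<exists>u\<in>X. T u = u"
proof -
  define xs where "xs = (\<lambda>n. (T ^^ n) x0)"
  have xX: "\<forall>n. xs n \<in> X"
  proof
    fix n show "xs n \<in> X" unfolding xs_def by (induction n) (use x0 TX in auto)
  qed
  have xS: "\<forall>n. xs (Suc n) = T (xs n)" unfolding xs_def by simp
  define s where "s = Sup {t. \<exists>y\<in>X. lbnd xs y t}"
  have bdd: "bdd_above {t. \<exists>y\<in>X. lbnd xs y t}" unfolding bdd_above_def using lb_le1 by blast
  have "s0 \<le> s" unfolding s_def using y0 l0 by (intro cSup_upper[OF _ bdd]) (auto simp: xs_def)
  hence sp: "0 < s" using s0 by linarith
  obtain u where uX: "u \<in> X" and hu: "\<forall>t < s. lbnd xs u t"
    using center_exists[OF cat adm comp xX y0 s0] l0 unfolding s_def xs_def by blast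
  have hTu: "\<forall>t < s. lbnd xs (T u) t"
    using Tu_center[OF adm TX vic xX xS sig(1) _ uX hu] sig(2) unfolding xs_def by auto
  have "T u = u"
    by (rule unique_center[OF cat adm xX _ uX]) (use TX uX sp hu hTu in \<open>auto simp: s_def\<close>)
  thus ?thesis using uX by blast
qed


theorem theorem4p1:
  fixes X :: "'a::metric_space set" and T :: "'a \<Rightarrow> 'a"
  assumes "CAT1 X" and "admissible X" and "complete X"
    and "T ` X \<subseteq> X" and "vicinal X T"
  shows "Fix X T \<noteq> {} \<longleftrightarrow>
    (\<exists>x\<in>X. spherically_bounded X (\<lambda>n. (T ^^ n) x) \<and>
       (SUP n\<in>{1..}. ereal (dist ((T ^^ n) x) ((T ^^ (n - 1)) x))) < ereal (pi / 2))"
proof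
  assume "Fix X T \<noteq> {}"
  then obtain u where uX: "u \<in> X" and Tu: "T u = u" unfolding Fix_def by blast
  have it: "(T ^^ n) u = u" for n by (induction n) (use Tu in auto)
  have "(INF y\<in>X. limsup (\<lambda>n. ereal (dist ((T ^^ n) u) y))) \<le> limsup (\<lambda>n. ereal (dist ((T ^^ n) u) u))"
    using uX by (rule INF_lower)
  also have "\<dots> = 0" by (simp add: it Limsup_const zero_ereal_def)
  finally have sb: "spherically_bounded X (\<lambda>n. (T ^^ n) u)"
    unfolding spherically_bounded_def using pi_gt_zero
    by (meson ereal_less(2) half_gt_zero order_le_less_trans)
  have "(SUP n\<in>{1..}. ereal (dist ((T ^^ n) u) ((T ^^ (n - 1)) u))) = 0"
    by (simp add: it zero_ereal_def)
  hence "(SUP n\<in>{1..}. ereal (dist ((T ^^ n) u) ((T ^^ (n - 1)) u))) < ereal (pi / 2)"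
    using pi_gt_zero by simp
  thus "\<exists>x\<in>X. spherically_bounded X (\<lambda>n. (T ^^ n) x) \<and>
       (SUP n\<in>{1..}. ereal (dist ((T ^^ n) x) ((T ^^ (n - 1)) x))) < ereal (pi / 2)"
    using uX sb by blast
next
  assume "\<exists>x\<in>X. spherically_bounded X (\<lambda>n. (T ^^ n) x) \<and>
       (SUP n\<in>{1..}. ereal (dist ((T ^^ n) x) ((T ^^ (n - 1)) x))) < ereal (pi / 2)"
  then obtain x where xX: "x \<in> X" and sb: "spherically_bounded X (\<lambda>n. (T ^^ n) x)"
    and sup: "(SUP n\<in>{1..}. ereal (dist ((T ^^ n) x) ((T ^^ (n - 1)) x))) < ereal (pi / 2)" by blast
  obtain z where z1: "(SUP n\<in>{1..}. ereal (dist ((T ^^ n) x) ((T ^^ (n - 1)) x))) < ereal z"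
    and z2: "ereal z < ereal (pi / 2)" using ereal_dense2[OF sup] by blast
  have sig: "\<forall>n. dist ((T ^^ Suc n) x) ((T ^^ n) x) \<le> z"
  proof
    fix n
    have "ereal (dist ((T ^^ Suc n) x) ((T ^^ (Suc n - 1)) x)) \<le> (SUP n\<in>{1..}. ereal (dist ((T ^^ n) x) ((T ^^ (n - 1)) x)))"
      by (rule SUP_upper) simp
    hence "ereal (dist ((T ^^ Suc n) x) ((T ^^ (Suc n - 1)) x)) < ereal z" using z1 by (rule order.strict_trans1)
    hence "ereal (dist ((T ^^ Suc n) x) ((T ^^ n) x)) < ereal z" by (simp only: diff_Suc_1)
    thus "dist ((T ^^ Suc n) x) ((T ^^ n) x) \<le> z" by simp
  qed
  have zp: "z < pi/2" using z2 by simp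
  obtain y where yX: "y \<in> X" and ly: "limsup (\<lambda>n. ereal (dist ((T ^^ n) x) y)) < ereal (pi / 2)"
    using sb unfolding spherically_bounded_def INF_less_iff by blast
  obtain r where r1: "limsup (\<lambda>n. ereal (dist ((T ^^ n) x) y)) < ereal r" and r2: "ereal r < ereal (pi / 2)"
    using ereal_dense2[OF ly] by blast
  define r' where "r' = max r 0"
  have r2': "r < pi/2" using r2 by simp
  have r'p: "0 \<le> r'" "r' < pi/2" using r2' pi_gt_zero unfolding r'_def by (auto simp: max_def)
  have ev: "eventually (\<lambda>n. ereal (dist ((T ^^ n) x) y) < ereal r) sequentially"
    using Limsup_lessD[OF r1] .
  have "lbnd (\<lambda>n. (T ^^ n) x) y (cos r')"
    unfolding lbnd_def using ev
  proof (rule eventually_mono)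
    fix n assume "ereal (dist ((T ^^ n) x) y) < ereal r"
    hence "dist ((T ^^ n) x) y \<le> r'" unfolding r'_def by simp
    thus "cos r' \<le> cos (dist ((T ^^ n) x) y)" using r'p pi_gt_zero
      using zero_le_dist[of "(T ^^ n) x" y] by (subst cos_mono_le_eq) linarith+
  qed
  moreover have "0 < cos r'" using r'p pi_gt_zero by (intro cos_gt_zero_pi) linarith+
  ultimately obtain u where "u \<in> X" "T u = u"
    using fix_exists[OF assms xX zp sig yX] by blast
  thus "Fix X T \<noteq> {}" unfolding Fix_def by blast
qed

end
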